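(* Let $({}^bS^2,Z,\omega,\mu)$ be the $b$-symplectic sphere with cylindrical coordinates $(h,\theta)$, $-1<h<1$, with singular hypersurface $Z=\{h_z\}\times S^1$ for some $-1<h_z<1$, with the rotation action about the vertical axis and its moment map $\mu$. Then its Bohr-Sommerfeld quantization with sign $\tilde{Q}({}^bS^2)=\bigoplus_{b\in B_{BS}}\epsilon(b)\,\mathbb{C}(b)$ is a finite-dimensional vector space.
   Context: $\omega$ is a $b$-symplectic form on $S^2$ (a closed form of maximal rank as a section of $\Lambda^2$ of the $b$-cotangent bundle, singular along $Z$, e.g. $\frac{dh}{h-h_z}\wedge d\theta$ near $Z$), which is integral, with a prequantum line bundle $\mathbb{L}$ with connection of curvature $\omega$ on the complement of $Z$; $\mu$ is a $b$-function (of the form $c\log|h-h_z|+$smooth near $Z$), normalized compatibly with the connection. $B_{BS}$ is the Bohr-Sommerfeld set: the set of values $b$ of $\mu$ whose leaf $\mu^{-1}(b)$ (a circle or pole) admits a nonzero global flat section of $\mathbb{L}$. Here leaves in the northern part $S^2_+=(h_z,1)\times S^1$ and southern part $S^2_-=(-1,h_z)\times S^1$ are counted separately: the sign $\epsilon(b)=+1$ if $\mu^{-1}(b)$ is a Bohr-Sommerfeld leaf in $S^2_+$ and $\epsilon(b)=-1$ if it lies in $S^2_-$. $\mathbb{C}(b)$ is the one-dimensional $S^1$-representation of weight $b$, and the sum is a formal (virtual) sum of $T$-modules with integer multiplicities. *)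

theory Defs
  imports "HOL-Analysis.Analysis"
begin

text \<open>Points of S^2 are described by cylindrical coordinates (h, theta), h in [-1,1]
  (h = 1, -1 are the poles).  The rotation action is Hamiltonian with an
  S^1-invariant moment map, i.e. a function of h only; the identity
  iota_{d/dtheta} omega = - d mu forces omega = mu'(h) dh /\ dtheta, so the pair
  (omega, mu) is encoded by the function mu of h.\<close>

definition b_sphere_moment :: "real \<Rightarrow> (real \<Rightarrow> real) \<Rightarrow> bool" where
  "b_sphere_moment hz \<mu> \<longleftrightarrow>
     -1 < hz \<and> hz < 1 \<and>
     continuous_on ({-1..1} - {hz}) \<mu> \<and>
     (\<forall>h \<in> {-1<..<1} - {hz}. \<exists>d. (\<mu> has_real_derivative d) (at h) \<and> d \<noteq> 0) \<and>
     (\<exists>c g \<epsilon>. c \<noteq> 0 \<and> \<epsilon> > 0 \<and>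
        (\<forall>n. (deriv ^^ n) g differentiable_on {hz - \<epsilon> <..< hz + \<epsilon>}) \<and>
        (\<forall>h. 0 < \<bar>h - hz\<bar> \<and> \<bar>h - hz\<bar> < \<epsilon> \<longrightarrow> \<mu> h = c * ln \<bar>h - hz\<bar> + g h))"

text \<open>With mu normalized compatibly with the prequantum
  connection, the leaf mu^{-1}(b) (a circle {h} x S^1 or a pole) carries a nonzero
  global flat section iff b is an integer.\<close>

definition BS_north :: "real \<Rightarrow> (real \<Rightarrow> real) \<Rightarrow> int \<Rightarrow> bool" where
  "BS_north hz \<mu> b \<longleftrightarrow> (\<exists>h \<in> {hz<..1}. \<mu> h = of_int b)"

definition BS_south :: "real \<Rightarrow> (real \<Rightarrow> real) \<Rightarrow> int \<Rightarrow> bool" where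
  "BS_south hz \<mu> b \<longleftrightarrow> (\<exists>h \<in> {-1..<hz}. \<mu> h = of_int b)"

text \<open>The quantization with sign, as a virtual S^1-module: the function sending a
  weight b to the integer multiplicity of C(b) in the formal sum
  sum_{b in B_BS} epsilon(b) C(b) (northern leaves contribute +1, southern -1).\<close>

definition Q_sign :: "real \<Rightarrow> (real \<Rightarrow> real) \<Rightarrow> int \<Rightarrow> int" where
  "Q_sign hz \<mu> b = (if BS_north hz \<mu> b then 1 else 0) - (if BS_south hz \<mu> b then 1 else 0)"

definition finite_dim_virtual :: "(int \<Rightarrow> int) \<Rightarrow> bool" where
  "finite_dim_virtual m \<longleftrightarrow> finite {b. m b \<noteq> 0}"

end

theory Submission
  imports Defs
begin

lemma cont_bound:
  fixes f :: "real \<Rightarrow> real"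
  assumes "continuous_on {a..b} f"
  shows "\<exists>B. \<forall>x\<in>{a..b}. \<bar>f x\<bar> \<le> B"
proof -
  have "compact (f ` {a..b})" using assms compact_continuous_image compact_Icc by blast
  then have "bounded (f ` {a..b})" by (rule compact_imp_bounded)
  then show ?thesis unfolding bounded_real by auto
qed

lemma core:
  fixes hz c \<delta> :: real and \<mu> g :: "real \<Rightarrow> real"
  assumes hz1: "-1 < hz" and hz2: "hz < 1"
    and cont: "continuous_on ({-1..1} - {hz}) \<mu>"
    and c: "c > 0" and d0: "\<delta> > 0" and d1: "\<delta> < 1"
    and dl: "hz - \<delta> \<ge> -1" and dr: "hz + \<delta> \<le> 1"
    and gc: "continuous_on {hz-\<delta>..hz+\<delta>} g"
    and rep: "\<And>h. 0 < \<bar>h - hz\<bar> \<Longrightarrow> \<bar>h - hz\<bar> \<le> \<delta> \<Longrightarrow> \<mu> h = c * ln \<bar>h - hz\<bar> + g h"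
  shows "finite {b. Q_sign hz \<mu> b \<noteq> 0}"
proof -
  obtain G where G: "\<And>x. x \<in> {hz-\<delta>..hz+\<delta>} \<Longrightarrow> \<bar>g x\<bar> \<le> G"
    using cont_bound[OF gc] by blast
  obtain K1 where K1: "\<And>x. x \<in> {-1..hz-\<delta>} \<Longrightarrow> \<bar>\<mu> x\<bar> \<le> K1"
  proof -
    have "{-1..hz-\<delta>} \<subseteq> {-1..1} - {hz}" using d0 dr by auto
    then show ?thesis using that cont_bound[OF continuous_on_subset[OF cont]] by blast
  qed
  obtain K2 where K2: "\<And>x. x \<in> {hz+\<delta>..1} \<Longrightarrow> \<bar>\<mu> x\<bar> \<le> K2"
  proof -
    have "{hz+\<delta>..1} \<subseteq> {-1..1} - {hz}" using d0 dl by auto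
    then show ?thesis using that cont_bound[OF continuous_on_subset[OF cont]] by blast
  qed
  define K where "K = max G (max K1 K2)"
  have ub: "\<mu> h \<le> K" if "h \<in> {-1..1}" "h \<noteq> hz" for h
  proof (cases "\<bar>h - hz\<bar> \<le> \<delta>")
    case True
    have "ln \<bar>h - hz\<bar> \<le> ln \<delta>" using True that by auto
    also have "ln \<delta> < 0" using d0 d1 by simp
    finally have "c * ln \<bar>h - hz\<bar> \<le> 0" using c by (simp add: mult_nonneg_nonpos)
    moreover have "g h \<le> G" using G[of h] True by (auto simp: abs_le_iff)
    ultimately show ?thesis using rep[of h] True that unfolding K_def by auto
  next
    case False
    then have "h \<in> {-1..hz-\<delta>} \<or> h \<in> {hz+\<delta>..1}" using that by auto
    then show ?thesis using K1 K2 unfolding K_def by (meson abs_ge_self max.coboundedI1 max.coboundedI2 order.trans)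
  qed
  have small: "\<exists>t. 0 < t \<and> t \<le> \<delta> \<and> c * ln t + G < M" for M
  proof -
    define t where "t = min \<delta> (exp ((M - G - 1) / c))"
    have t0: "t > 0" using d0 by (simp add: t_def)
    have "ln t \<le> (M - G - 1) / c"
      using t0 by (metis ln_exp ln_le_cancel_iff exp_gt_zero min.cobounded2 t_def)
    then have "c * ln t \<le> M - G - 1" using c by (simp add: field_simps)
    then show ?thesis using t0 by (intro exI[of _ t]) (auto simp: t_def)
  qed
  have lbN: "\<exists>h\<in>{hz<..1}. \<mu> h < M" for M
  proof -
    obtain t where t: "0 < t" "t \<le> \<delta>" "c * ln t + G < M" using small by blast
    have "\<mu> (hz + t) = c * ln t + g (hz + t)" using rep[of "hz+t"] t by auto
    moreover have "g (hz+t) \<le> G" using G[of "hz+t"] t by auto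
    ultimately show ?thesis using t dr by (intro bexI[of _ "hz+t"]) auto
  qed
  have lbS: "\<exists>h\<in>{-1..<hz}. \<mu> h < M" for M
  proof -
    obtain t where t: "0 < t" "t \<le> \<delta>" "c * ln t + G < M" using small by blast
    have "\<mu> (hz - t) = c * ln t + g (hz - t)" using rep[of "hz-t"] t by auto
    moreover have "g (hz-t) \<le> G" using G[of "hz-t"] t by auto
    ultimately show ?thesis using t dl by (intro bexI[of _ "hz-t"]) auto
  qed
  have iN: "is_interval (\<mu> ` {hz<..1})"
    unfolding is_interval_connected_1
    by (rule connected_continuous_image[OF continuous_on_subset[OF cont]])
       (use hz1 in \<open>auto simp: is_interval_connected_1[symmetric] is_interval_oc\<close>)
  have iS: "is_interval (\<mu> ` {-1..<hz})"
    unfolding is_interval_connected_1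
    by (rule connected_continuous_image[OF continuous_on_subset[OF cont]])
       (use hz2 in \<open>auto simp: is_interval_connected_1[symmetric] is_interval_co\<close>)
  define L where "L = min (\<mu> 1) (\<mu> (-1))"
  have inN: "BS_north hz \<mu> b" if "of_int b \<le> L" for b
  proof -
    obtain h where h: "h \<in> {hz<..1}" "\<mu> h < of_int b" using lbN by blast
    have "\<mu> 1 \<in> \<mu> ` {hz<..1}" using hz2 by auto
    moreover have "\<mu> h \<in> \<mu> ` {hz<..1}" using h by auto
    ultimately have "of_int b \<in> \<mu> ` {hz<..1}"
      using iN h that unfolding is_interval_1 L_def by (meson less_imp_le min.boundedE)
    then show ?thesis unfolding BS_north_def by force
  qed
  have inS: "BS_south hz \<mu> b" if "of_int b \<le> L" for b
  proof -
    obtain h where h: "h \<in> {-1..<hz}" "\<mu> h < of_int b" using lbS by blast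
    have "\<mu> (-1) \<in> \<mu> ` {-1..<hz}" using hz1 by auto
    moreover have "\<mu> h \<in> \<mu> ` {-1..<hz}" using h by auto
    ultimately have "of_int b \<in> \<mu> ` {-1..<hz}"
      using iS h that unfolding is_interval_1 L_def by (meson less_imp_le min.boundedE)
    then show ?thesis unfolding BS_south_def by force
  qed
  have "{b. Q_sign hz \<mu> b \<noteq> 0} \<subseteq> {\<lfloor>L\<rfloor>..\<lceil>K\<rceil>}"
  proof
    fix b assume b: "b \<in> {b. Q_sign hz \<mu> b \<noteq> 0}"
    have "\<not> of_int b \<le> L" using inN inS b by (auto simp: Q_sign_def)
    moreover have "BS_north hz \<mu> b \<or> BS_south hz \<mu> b" using b by (auto simp: Q_sign_def split: if_splits)
    then obtain h where "h \<in> {-1..1}" "h \<noteq> hz" "\<mu> h = of_int b"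
    proof
      assume "BS_north hz \<mu> b"
      then obtain h where "h \<in> {hz<..1}" "\<mu> h = of_int b" unfolding BS_north_def by blast
      then show ?thesis using hz1 by (intro that[of h]) auto
    next
      assume "BS_south hz \<mu> b"
      then obtain h where "h \<in> {-1..<hz}" "\<mu> h = of_int b" unfolding BS_south_def by blast
      then show ?thesis using hz2 by (intro that[of h]) auto
    qed
    then have "of_int b \<le> K" using ub by metis
    ultimately show "b \<in> {\<lfloor>L\<rfloor>..\<lceil>K\<rceil>}" by (auto simp: floor_le_iff le_ceiling_iff)
  qed
  then show ?thesis by (rule finite_subset) simp
qed

theorem lemma4p6:
  fixes hz :: real and \<mu> :: "real \<Rightarrow> real"
  assumes "b_sphere_moment hz \<mu>"
  shows "finite_dim_virtual (Q_sign hz \<mu>)"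
proof -
  obtain c g \<epsilon> where hz1: "-1 < hz" and hz2: "hz < 1"
    and cont: "continuous_on ({-1..1} - {hz}) \<mu>"
    and c: "c \<noteq> 0" and e: "\<epsilon> > 0"
    and gd: "\<And>n. (deriv ^^ n) g differentiable_on {hz - \<epsilon> <..< hz + \<epsilon>}"
    and rep: "\<And>h. 0 < \<bar>h - hz\<bar> \<and> \<bar>h - hz\<bar> < \<epsilon> \<Longrightarrow> \<mu> h = c * ln \<bar>h - hz\<bar> + g h"
    using assms unfolding b_sphere_moment_def by blast
  define \<delta> where "\<delta> = min (\<epsilon>/2) (min ((1-hz)/2) ((hz+1)/2))"
  have d0: "\<delta> > 0" and d1: "\<delta> < 1" and dl: "hz - \<delta> \<ge> -1" and dr: "hz + \<delta> \<le> 1"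
    and de: "\<delta> < \<epsilon>"
  proof -
    have m1: "\<delta> \<le> \<epsilon>/2" unfolding \<delta>_def by (rule min.cobounded1)
    have m2: "\<delta> \<le> (1-hz)/2" unfolding \<delta>_def by (meson min.cobounded1 min.coboundedI2)
    have m3: "\<delta> \<le> (hz+1)/2" unfolding \<delta>_def by (meson min.cobounded2 min.coboundedI2)
    have m4: "\<delta> > 0" unfolding \<delta>_def using e hz1 hz2 by auto
    show "\<delta> > 0" "\<delta> < 1" "hz - \<delta> \<ge> -1" "hz + \<delta> \<le> 1" "\<delta> < \<epsilon>"
      using m1 m2 m3 m4 e hz1 hz2 by simp_all
  qed
  have "g differentiable_on {hz - \<epsilon> <..< hz + \<epsilon>}" using gd[of 0] by simp
  then have "continuous_on {hz - \<epsilon> <..< hz + \<epsilon>} g" by (rule differentiable_imp_continuous_on)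
  then have gc: "continuous_on {hz-\<delta>..hz+\<delta>} g" by (rule continuous_on_subset) (use de in auto)
  have rep': "\<And>h. 0 < \<bar>h - hz\<bar> \<Longrightarrow> \<bar>h - hz\<bar> \<le> \<delta> \<Longrightarrow> \<mu> h = c * ln \<bar>h - hz\<bar> + g h"
    using rep de by auto
  show ?thesis
  proof (cases "c > 0")
    case True
    show ?thesis unfolding finite_dim_virtual_def
      by (rule core[OF hz1 hz2 cont True d0 d1 dl dr gc rep'])
  next
    case False
    then have c': "-c > 0" using c by simp
    have fin: "finite {b. Q_sign hz (\<lambda>h. - \<mu> h) b \<noteq> 0}"
    proof (rule core[OF hz1 hz2 _ c' d0 d1 dl dr, of _ "\<lambda>h. - g h"])
      show "continuous_on ({-1..1} - {hz}) (\<lambda>h. - \<mu> h)" using cont by (intro continuous_intros)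
      show "continuous_on {hz-\<delta>..hz+\<delta>} (\<lambda>h. - g h)" using gc by (intro continuous_intros)
      show "- \<mu> h = - c * ln \<bar>h - hz\<bar> + - g h" if "0 < \<bar>h - hz\<bar>" "\<bar>h - hz\<bar> \<le> \<delta>" for h
        using rep'[OF that] by simp
    qed
    have eq: "Q_sign hz (\<lambda>h. - \<mu> h) (-b) = Q_sign hz \<mu> b" for b
    proof -
      have "(- \<mu> h = of_int (-b)) = (\<mu> h = of_int b)" for h by auto
      then show ?thesis unfolding Q_sign_def BS_north_def BS_south_def by simp
    qed
    have "{b. Q_sign hz \<mu> b \<noteq> 0} = uminus ` {b. Q_sign hz (\<lambda>h. - \<mu> h) b \<noteq> 0}"
      using eq by (auto simp: image_iff) (metis add.inverse_inverse)+
    then show ?thesis unfolding finite_dim_virtual_def using fin by simp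
  qed
qed

end
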